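(* Let $n\ge1$, let $q_1,\dots,q_n$ be positive integers and $c_1,\dots,c_n>0$. For $y_0\in\mathbb{R}$ let $\Gamma_n(x)=y_0-\sum_{j=1}^n c_j\sin(2\pi q_jx)$ and let $\mu_n$ be the probability measure on $\mathbb{T}^2$ obtained as the push-forward of Lebesgue measure on $[0,1]$ under $x\mapsto (x,\Gamma_n(x)) \bmod \mathbb{Z}^2$ (i.e. $\int f\,d\mu_n=\int_0^1 f(x,\Gamma_n(x))\,dx$). Then for every trigonometric polynomial $f$ on $\mathbb{T}^2$ and every $\varepsilon>0$ there exist numbers $\tilde c_n=\tilde c_n(\varepsilon,f)$ and $\tilde q_n=\tilde q_n(\varepsilon,f,c_1,\dots,c_n,q_1,\dots,q_{n-1})$, independent of $y_0$, such that if $c_n>\tilde c_n$ and $q_n>\tilde q_n$ then $$\left|\int_{\mathbb{T}^2}f\,d\mu_n-\int_{\mathbb{T}^2}f(z)\,dz\right|<\varepsilon .$$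
   Context: $\mathbb{T}^2=\mathbb{R}^2/\mathbb{Z}^2$ with Lebesgue measure $dz$. (In the paper, when $q_j=4s_jq_{j-1}$ for natural $s_j$, the graph of $\Gamma_n$ is an invariant curve of $G_n(\alpha)(x,y)=(x+\alpha,\,y+g_n(x)-g_n(x+\alpha))$, $g_n=\sum_{j\le n}c_j\sin 2\pi q_jx$, and $\mu_n$ is its invariant probability measure on that curve for irrational $\alpha$.) *)

theory Defs
  imports "HOL-Analysis.Analysis"
begin

text \<open>Trigonometric polynomials on the torus T^2 = R^2/Z^2, viewed as
  Z^2-periodic complex-valued functions on R^2: finite linear combinations
  of the characters e^{2 pi i (k x + l y)}.\<close>
definition trig_poly_T2 :: "(real \<Rightarrow> real \<Rightarrow> complex) \<Rightarrow> bool" where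
  "trig_poly_T2 f \<longleftrightarrow> (\<exists>S :: (int \<times> int) set. \<exists>a :: int \<times> int \<Rightarrow> complex. finite S \<and>
     (\<forall>x y. f x y = (\<Sum>(k,l)\<in>S. a (k,l) *
        exp (2 * pi * \<i> * complex_of_real (real_of_int k * x + real_of_int l * y)))))"

definition Gamma :: "nat \<Rightarrow> (nat \<Rightarrow> real) \<Rightarrow> (nat \<Rightarrow> nat) \<Rightarrow> real \<Rightarrow> real \<Rightarrow> real" where
  "Gamma n c q y0 x = y0 - (\<Sum>j=1..n. c j * sin (2 * pi * real (q j) * x))"

text \<open>Integral of f against mu_n: push-forward of Lebesgue measure on [0,1]
  under x \<mapsto> (x, Gamma_n x) mod Z^2 (f is Z^2-periodic).\<close>
definition int_mu :: "nat \<Rightarrow> (nat \<Rightarrow> real) \<Rightarrow> (nat \<Rightarrow> nat) \<Rightarrow> real \<Rightarrow> (real \<Rightarrow> real \<Rightarrow> complex) \<Rightarrow> complex" where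
  "int_mu n c q y0 f = integral {0..1} (\<lambda>x. f x (Gamma n c q y0 x))"

text \<open>Integral of f against Lebesgue (Haar) measure on T^2, via the fundamental domain [0,1]^2.\<close>
definition int_T2 :: "(real \<Rightarrow> real \<Rightarrow> complex) \<Rightarrow> complex" where
  "int_T2 f = integral ({0..1} \<times> {0..1}) (\<lambda>z. f (fst z) (snd z))"

end

theory Submission
  imports Defs
begin

lemma osc_bound:
  fixes \<phi> dphi ddphi :: "real \<Rightarrow> real" and lam M a b :: real
  assumes ab: "a \<le> b"
    and d1: "\<And>y. y \<in> {a..b} \<Longrightarrow> (\<phi> has_real_derivative dphi y) (at y)"
    and d2: "\<And>y. y \<in> {a..b} \<Longrightarrow> (dphi has_real_derivative ddphi y) (at y)"
    and c2: "continuous_on {a..b} ddphi"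
    and lam: "lam > 0" "\<And>y. y \<in> {a..b} \<Longrightarrow> lam \<le> \<bar>dphi y\<bar>"
    and M: "\<And>y. y \<in> {a..b} \<Longrightarrow> \<bar>ddphi y\<bar> \<le> M"
  shows "cmod (integral {a..b} (\<lambda>y. exp (\<i> * of_real (\<phi> y)))) \<le> 2/lam + (b-a)*M/lam^2"
proof -
  define E where "E y = exp (\<i> * of_real (\<phi> y))" for y
  define F where "F y = E y * of_real (1 / dphi y)" for y
  define R where "R y = E y * of_real (ddphi y / (dphi y)^2)" for y
  have nz: "dphi y \<noteq> 0" if "y \<in> {a..b}" for y using lam[of] that
    by (metis abs_zero lam(1) lam(2) linorder_not_le)
  have nE: "cmod (E y) = 1" for y unfolding E_def by (simp add: norm_exp_i_times)
  have D: "(F has_vector_derivative (\<i> * E y - R y)) (at y within {a..b})" if y: "y \<in> {a..b}" for y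
  proof -
    have e1: "((\<lambda>y. \<i> * of_real (\<phi> y)) has_vector_derivative (\<i> * of_real (dphi y))) (at y)"
      by (intro derivative_intros d1 y)
    have e2: "(E has_vector_derivative (\<i> * of_real (dphi y) * E y)) (at y)"
      using field_vector_diff_chain_at[OF e1 DERIV_exp] unfolding E_def o_def by simp
    have e3: "((\<lambda>y. 1 / dphi y) has_real_derivative (- ddphi y / (dphi y)^2)) (at y)"
      using DERIV_inverse_fun[OF d2[OF y] nz[OF y]] by (simp add: divide_inverse power2_eq_square)
    have e4: "((\<lambda>y. of_real (1 / dphi y) :: complex) has_vector_derivative of_real (- ddphi y / (dphi y)^2)) (at y)"
      by (intro derivative_intros e3)
    have "(F has_vector_derivative (E y * of_real (- ddphi y / (dphi y)^2) + (\<i> * of_real (dphi y) * E y) * of_real (1 / dphi y))) (at y)"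
      unfolding F_def by (rule has_vector_derivative_mult[OF e2 e4])
    moreover have "E y * of_real (- ddphi y / (dphi y)^2) + (\<i> * of_real (dphi y) * E y) * of_real (1 / dphi y) = \<i> * E y - R y"
      using nz[OF y] by (simp add: R_def field_simps)
    ultimately show ?thesis by (simp add: has_vector_derivative_at_within)
  qed
  have ftc: "((\<lambda>y. \<i> * E y - R y) has_integral F b - F a) {a..b}"
    by (rule fundamental_theorem_of_calculus[OF ab D]) auto
  have cphi: "continuous_on {a..b} \<phi>"
    by (meson DERIV_isCont continuous_at_imp_continuous_on d1)
  have cphi1: "continuous_on {a..b} dphi"
    by (meson DERIV_isCont continuous_at_imp_continuous_on d2)
  have cE: "continuous_on {a..b} E" unfolding E_def by (intro continuous_intros cphi)
  have cR: "continuous_on {a..b} R" unfolding R_def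
    using nz by (intro continuous_intros cE cphi1 c2) auto
  have iE: "E integrable_on {a..b}" by (rule integrable_continuous_real[OF cE])
  have iR: "R integrable_on {a..b}" by (rule integrable_continuous_real[OF cR])
  have "integral {a..b} (\<lambda>y. \<i> * E y - R y) = \<i> * integral {a..b} E - integral {a..b} R"
    using iE iR by (simp add: integral_diff integrable_on_cmult_left integral_mult_right)
  hence eq: "\<i> * integral {a..b} E = (F b - F a) + integral {a..b} R"
    using integral_unique[OF ftc] by (simp add: algebra_simps)
  have nF: "cmod (F y) \<le> 1/lam" if "y \<in> {a..b}" for y
  proof -
    have "cmod (F y) = 1 / \<bar>dphi y\<bar>" unfolding F_def by (simp add: norm_mult norm_divide nE)
    also have "\<dots> \<le> 1/lam" using lam(1) lam(2)[OF that] by (intro divide_left_mono) (auto intro: mult_pos_pos)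
    finally show ?thesis .
  qed
  have nR: "cmod (R y) \<le> M/lam^2" if "y \<in> {a..b}" for y
  proof -
    have "cmod (R y) = \<bar>ddphi y\<bar> / (dphi y)^2" unfolding R_def by (simp add: norm_mult norm_divide nE norm_power)
    also have "\<dots> \<le> M / lam^2"
    proof (rule frac_le)
      show "0 \<le> M" using M[of a] ab by force
      show "\<bar>ddphi y\<bar> \<le> M" using M that by auto
      show "0 < lam^2" using lam by simp
      show "lam^2 \<le> (dphi y)^2" using lam(2)[OF that] lam(1)
        by (metis abs_le_square_iff abs_of_pos)
    qed
    finally show ?thesis .
  qed
  have "cmod (integral {a..b} R) \<le> M/lam^2 * (b-a)"
    by (rule integral_bound[OF ab cR nR])
  moreover have "cmod (integral {a..b} E) = cmod (\<i> * integral {a..b} E)" by (simp add: norm_mult)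
  moreover have "cmod (F b - F a) \<le> 2/lam"
    using nF[of a] nF[of b] ab norm_triangle_ineq4[of "F b" "F a"] by auto
  ultimately have "cmod (integral {a..b} E) \<le> 2/lam + M/lam^2 * (b-a)"
    using eq norm_triangle_ineq[of "F b - F a" "integral {a..b} R"] by auto
  thus ?thesis unfolding E_def by (simp add: field_simps)
qed

lemma cos_lb_half:
  fixes z \<eta> :: real
  assumes "0 < \<eta>" "\<eta> \<le> 1/16" "0 \<le> z" "z \<le> 1/2" "z \<le> 1/4 - \<eta> \<or> 1/4 + \<eta> \<le> z"
  shows "sin (2*pi*\<eta>) \<le> \<bar>cos (2*pi*z)\<bar>"
  using assms(5)
proof
  assume h: "z \<le> 1/4 - \<eta>"
  have "cos (pi/2 - 2*pi*\<eta>) \<le> cos (2*pi*z)"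
  proof (rule cos_monotone_0_pi_le)
    have "pi * (4*z + 4*\<eta>) \<le> pi * 1" using h by (intro mult_left_mono) auto
    thus "pi/2 - 2*pi*\<eta> \<le> pi" using assms by (simp add: field_simps)
    have "pi * (4*z + 4*\<eta>) \<le> pi * 1" using h by (intro mult_left_mono) auto
    thus "2*pi*z \<le> pi/2 - 2*pi*\<eta>" by (simp add: field_simps)
    show "0 \<le> 2*pi*z" using assms by simp
  qed
  moreover have "cos (pi/2 - 2*pi*\<eta>) = sin (2*pi*\<eta>)" by (simp add: cos_diff)
  ultimately show ?thesis by linarith
next
  assume h: "1/4 + \<eta> \<le> z"
  have "cos (2*pi*z) \<le> cos (pi/2 + 2*pi*\<eta>)"
  proof (rule cos_monotone_0_pi_le)
    have "pi * (1 + 4*\<eta>) \<le> pi * (4*z)" using h by (intro mult_left_mono) auto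
    thus "pi/2 + 2*pi*\<eta> \<le> 2*pi*z" by (simp add: field_simps)
    have "pi * (2*z) \<le> pi * 1" using assms by (intro mult_left_mono) auto
    thus "2*pi*z \<le> pi" by (simp add: field_simps)
    show "0 \<le> pi/2 + 2*pi*\<eta>" using assms by simp
  qed
  moreover have "cos (pi/2 + 2*pi*\<eta>) = - sin (2*pi*\<eta>)" by (simp add: cos_add)
  ultimately show ?thesis by linarith
qed

lemma cos_lb:
  fixes y \<eta> :: real
  assumes "0 < \<eta>" "\<eta> \<le> 1/16" "0 \<le> y" "y \<le> 1"
    "y \<le> 1/4 - \<eta> \<or> (1/4 + \<eta> \<le> y \<and> y \<le> 3/4 - \<eta>) \<or> 3/4 + \<eta> \<le> y"
  shows "sin (2*pi*\<eta>) \<le> \<bar>cos (2*pi*y)\<bar>"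
proof (cases "y \<le> 1/2")
  case True
  then show ?thesis using assms by (intro cos_lb_half) auto
next
  case False
  have "cos (2*pi*y) = cos (2*pi*(1-y))"
  proof -
    have "cos (2*pi*(1-y)) = cos (2*pi - 2*pi*y)" by (simp add: algebra_simps)
    also have "\<dots> = cos (2*pi*y)" by (simp add: cos_diff)
    finally show ?thesis by simp
  qed
  moreover have "sin (2*pi*\<eta>) \<le> \<bar>cos (2*pi*(1-y))\<bar>"
    using assms False by (intro cos_lb_half) auto
  ultimately show ?thesis by simp
qed

lemma good_piece:
  fixes a b s \<delta> :: real
  assumes ab: "a \<le> b" "b - a \<le> 1" and d: "\<delta> > 0" and s: "s \<noteq> 0"
    and g: "\<And>y. y \<in> {a..b} \<Longrightarrow> \<delta> \<le> \<bar>cos (2*pi*y)\<bar>"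
  shows "cmod (integral {a..b} (\<lambda>y. exp (\<i> * of_real (s * sin (2*pi*y))))) \<le> (1/\<delta> + 1/\<delta>^2) / \<bar>s\<bar>"
proof -
  have "cmod (integral {a..b} (\<lambda>y. exp (\<i> * of_real (s * sin (2*pi*y)))))
      \<le> 2/(2*pi*\<bar>s\<bar>*\<delta>) + (b-a)*(4*pi^2*\<bar>s\<bar>)/(2*pi*\<bar>s\<bar>*\<delta>)^2"
  proof (rule osc_bound[where dphi = "\<lambda>y. 2 * pi * s * cos (2*pi*y)" and ddphi = "\<lambda>y. -(4 * pi^2 * s * sin (2*pi*y))"])
    show "a \<le> b" by fact
    fix y
    show "((\<lambda>y. s * sin (2*pi*y)) has_real_derivative 2 * pi * s * cos (2*pi*y)) (at y)"
      by (auto intro!: derivative_eq_intros)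
    show "((\<lambda>y. 2 * pi * s * cos (2*pi*y)) has_real_derivative -(4 * pi^2 * s * sin (2*pi*y))) (at y)"
      by (auto intro!: derivative_eq_intros simp: power2_eq_square)
    show "continuous_on {a..b} (\<lambda>y. -(4 * pi^2 * s * sin (2*pi*y)))" by (intro continuous_intros)
    show "0 < 2*pi*\<bar>s\<bar>*\<delta>" using d s by simp
    assume y: "y \<in> {a..b}"
    have "2*pi*\<bar>s\<bar>*\<delta> \<le> 2*pi*\<bar>s\<bar>*\<bar>cos(2*pi*y)\<bar>" using g[OF y] by (intro mult_left_mono) auto
    thus "2*pi*\<bar>s\<bar>*\<delta> \<le> \<bar>2 * pi * s * cos (2*pi*y)\<bar>" by (simp add: abs_mult)
    have "\<bar>sin(2*pi*y)\<bar> \<le> 1" by simp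
    hence "4*pi^2*\<bar>s\<bar>*\<bar>sin(2*pi*y)\<bar> \<le> 4*pi^2*\<bar>s\<bar>*1" by (intro mult_left_mono) auto
    thus "\<bar>-(4 * pi^2 * s * sin (2*pi*y))\<bar> \<le> 4*pi^2*\<bar>s\<bar>" by (simp add: abs_mult)
  qed
  also have "\<dots> = 1/(pi*\<bar>s\<bar>*\<delta>) + (b-a)/(\<bar>s\<bar>*\<delta>^2)"
    using s d by (simp add: field_simps power2_eq_square)
  also have "\<dots> \<le> 1/(\<bar>s\<bar>*\<delta>) + 1/(\<bar>s\<bar>*\<delta>^2)"
  proof (rule add_mono)
    show "1/(pi*\<bar>s\<bar>*\<delta>) \<le> 1/(\<bar>s\<bar>*\<delta>)"
      using s d pi_ge_two by (intro divide_left_mono) (auto simp: mult_pos_pos)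
    show "(b-a)/(\<bar>s\<bar>*\<delta>^2) \<le> 1/(\<bar>s\<bar>*\<delta>^2)"
      using s d ab by (intro divide_right_mono) auto
  qed
  also have "\<dots> = (1/\<delta> + 1/\<delta>^2) / \<bar>s\<bar>" using s d by (simp add: field_simps)
  finally show ?thesis .
qed

lemma bessel_decay:
  fixes e :: real
  assumes e: "e > 0"
  shows "\<exists>T>0. \<forall>s. T \<le> \<bar>s\<bar> \<longrightarrow> cmod (integral {0..1} (\<lambda>y. exp (\<i> * of_real (s * sin (2*pi*y))))) \<le> e"
proof -
  define \<eta> where "\<eta> = min (1/16) (e/8)"
  have \<eta>: "0 < \<eta>" "\<eta> \<le> 1/16" "\<eta> \<le> e/8" using e by (auto simp: \<eta>_def)
  define \<delta> where "\<delta> = sin (2*pi*\<eta>)"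
  have \<delta>: "\<delta> > 0" unfolding \<delta>_def
  proof (rule sin_gt_zero)
    show "0 < 2*pi*\<eta>" using \<eta> by simp
    have "pi * (2*\<eta>) < pi * 1" using \<eta> by (intro mult_strict_left_mono) auto
    thus "2*pi*\<eta> < pi" by simp
  qed
  define K where "K = 1/\<delta> + 1/\<delta>^2"
  have K: "K > 0" using \<delta> by (simp add: K_def add_pos_pos)
  define T where "T = 6*K/e"
  have T: "T > 0" using K e by (simp add: T_def)
  show ?thesis
  proof (intro exI[of _ T] conjI allI impI T)
    fix s :: real assume sT: "T \<le> \<bar>s\<bar>"
    hence s: "s \<noteq> 0" using T by auto
    define h where "h y = exp (\<i> * of_real (s * sin (2*pi*y)))" for y
    have ch: "continuous_on S h" for S unfolding h_def by (intro continuous_intros)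
    have ih: "h integrable_on {a..b}" for a b by (rule integrable_continuous_real[OF ch])
    define p1 where "p1 = 1/4 - \<eta>"
    define p2 where "p2 = 1/4 + \<eta>"
    define p3 where "p3 = 3/4 - \<eta>"
    define p4 where "p4 = 3/4 + \<eta>"
    have ord: "0 \<le> p1" "p1 \<le> p2" "p2 \<le> p3" "p3 \<le> p4" "p4 \<le> 1"
      using \<eta> by (auto simp: p1_def p2_def p3_def p4_def)
    have split: "integral {0..1} h = integral {0..p1} h + integral {p1..p2} h + integral {p2..p3} h
        + integral {p3..p4} h + integral {p4..1} h"
    proof -
      have "integral {0..1} h = integral {0..p4} h + integral {p4..1} h"
        using ord by (intro Henstock_Kurzweil_Integration.integral_combine[symmetric] ih) auto
      moreover have "integral {0..p4} h = integral {0..p3} h + integral {p3..p4} h"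
        using ord by (intro Henstock_Kurzweil_Integration.integral_combine[symmetric] ih) auto
      moreover have "integral {0..p3} h = integral {0..p2} h + integral {p2..p3} h"
        using ord by (intro Henstock_Kurzweil_Integration.integral_combine[symmetric] ih) auto
      moreover have "integral {0..p2} h = integral {0..p1} h + integral {p1..p2} h"
        using ord by (intro Henstock_Kurzweil_Integration.integral_combine[symmetric] ih) auto
      ultimately show ?thesis by simp
    qed
    have nh: "cmod (h y) \<le> 1" for y unfolding h_def by (simp add: norm_exp_i_times)
    have bad1: "cmod (integral {p1..p2} h) \<le> 2 * \<eta>"
      using integral_bound[OF _ ch nh, of p1 p2] ord by (simp add: p1_def p2_def p3_def p4_def)
    have bad2: "cmod (integral {p3..p4} h) \<le> 2 * \<eta>"
      using integral_bound[OF _ ch nh, of p3 p4] ord by (simp add: p1_def p2_def p3_def p4_def)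
    have good1: "cmod (integral {0..p1} h) \<le> K / \<bar>s\<bar>"
      unfolding h_def K_def using ord \<delta> s \<eta>
      by (intro good_piece) (auto simp: \<delta>_def p1_def intro!: cos_lb)
    have good2: "cmod (integral {p2..p3} h) \<le> K / \<bar>s\<bar>"
      unfolding h_def K_def using ord \<delta> s \<eta>
      by (intro good_piece) (auto simp: \<delta>_def p2_def p3_def intro!: cos_lb)
    have good3: "cmod (integral {p4..1} h) \<le> K / \<bar>s\<bar>"
      unfolding h_def K_def using ord \<delta> s \<eta>
      by (intro good_piece) (auto simp: \<delta>_def p4_def intro!: cos_lb)
    have "K / \<bar>s\<bar> \<le> K / T" using K T sT by (intro divide_left_mono) auto
    also have "K / T = e/6" using K e by (simp add: T_def)
    finally have Ks: "K / \<bar>s\<bar> \<le> e/6" .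
    have "cmod (integral {0..1} h) \<le> cmod (integral {0..p1} h) + cmod (integral {p1..p2} h) + cmod (integral {p2..p3} h)
        + cmod (integral {p3..p4} h) + cmod (integral {p4..1} h)"
      unfolding split by (intro norm_triangle_le add_mono order_refl)
    also have "\<dots> \<le> e" using bad1 bad2 good1 good2 good3 Ks \<eta> by linarith
    finally show "cmod (integral {0..1} (\<lambda>y. exp (\<i> * of_real (s * sin (2*pi*y))))) \<le> e"
      unfolding h_def .
  qed
qed

lemma integral_split_grid:
  fixes h :: "real \<Rightarrow> complex" and Q :: nat
  assumes Q: "Q > 0" and ih: "h integrable_on {0..1}"
  shows "M \<le> Q \<Longrightarrow> integral {0..real M / Q} h = (\<Sum>m<M. integral {real m / Q..(real m + 1) / Q} h)"
proof (induction M)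
  case 0
  then show ?case by simp
next
  case (Suc M)
  have sub: "h integrable_on {0..real (Suc M) / Q}"
    using Suc.prems Q by (intro integrable_subinterval_real[OF ih]) (auto simp: field_simps)
  have "integral {0..real (Suc M) / Q} h = integral {0..real M / Q} h + integral {real M / Q..real (Suc M) / Q} h"
    using Q by (intro Henstock_Kurzweil_Integration.integral_combine[symmetric] sub) (auto simp: field_simps)
  also have "\<dots> = (\<Sum>m<Suc M. integral {real m / Q..(real m + 1) / Q} h)"
    using Suc by (simp add: add.commute)
  finally show ?case .
qed

lemma avg_lemma:
  fixes G H :: "real \<Rightarrow> complex" and e :: real
  assumes cG: "continuous_on {0..1} G" and nG: "\<And>x. x \<in> {0..1} \<Longrightarrow> cmod (G x) \<le> 1"
    and cH: "continuous_on UNIV H" and nH: "\<And>y. cmod (H y) \<le> 1"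
    and pH: "\<And>y m. H (y + real m) = H y" and e: "e > 0"
  shows "eventually (\<lambda>Q::nat. cmod (integral {0..1} (\<lambda>x. G x * H (real Q * x))) \<le> e + cmod (integral {0..1} H)) sequentially"
proof -
  have "uniformly_continuous_on {0..1} G" by (rule compact_uniformly_continuous[OF cG]) auto
  then obtain d where d: "d > 0" and dG: "\<And>x x'. x \<in> {0..1} \<Longrightarrow> x' \<in> {0..1} \<Longrightarrow> dist x' x < d \<Longrightarrow> dist (G x') (G x) < e"
    unfolding uniformly_continuous_on_def using e by metis
  obtain N :: nat where N: "N > 0" "inverse (real N) < d" using ex_inverse_of_nat_less[OF d] by auto
  define J where "J = integral {0..1} H"
  have iH: "(H has_integral J) (cbox 0 1)"
    unfolding J_def using integrable_continuous_real[of 0 1 H] cH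
    by (metis box_real(2) continuous_on_subset integrable_integral subset_UNIV)
  show ?thesis
    unfolding eventually_sequentially
  proof (intro exI[of _ N] allI impI)
    fix Q :: nat assume QN: "N \<le> Q"
    hence Q: "Q > 0" using N by simp
    have Qd: "1 / real Q < d"
    proof -
      have "1 / real Q \<le> 1 / real N" using QN N by (intro divide_left_mono) auto
      moreover have "1 / real N < d" using N(2) by (simp add: inverse_eq_divide)
      ultimately show ?thesis by linarith
    qed
    define k where "k x = G x * H (real Q * x)" for x
    have cHQ: "continuous_on S (\<lambda>x. H (real Q * x))" for S
      by (rule continuous_on_compose2[OF cH]) (auto intro!: continuous_intros)
    have ck: "continuous_on {0..1} k" unfolding k_def by (intro continuous_intros cG cHQ)
    have piece: "cmod (integral {real m / Q..(real m + 1) / Q} k) \<le> (e + cmod J) / Q" if m: "m < Q" for m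
    proof -
      define a where "a = real m / Q"
      define b where "b = (real m + 1) / Q"
      have ab: "0 \<le> a" "a \<le> b" "b \<le> 1" "b - a = 1 / Q"
        using m Q by (auto simp: a_def b_def field_simps)
      have sub: "{a..b} \<subseteq> {0..1}" using ab by auto
      have aff: "((\<lambda>x. H (real Q * x + - real m)) has_integral J /\<^sub>R real Q) (cbox ((0 - - real m) /\<^sub>R real Q) ((1 - - real m) /\<^sub>R real Q))"
        using has_integral_affinity'[OF iH, of "real Q" "- real m"] Q by simp
      have Hshift: "H (real Q * x + - real m) = H (real Q * x)" for x
        using pH[of "real Q * x - real m" m] by simp
      have iHQ: "((\<lambda>x. H (real Q * x)) has_integral J / of_real (real Q)) {a..b}"
        using aff unfolding Hshift a_def b_def
        by (simp add: scaleR_conv_of_real divide_inverse add.commute mult.commute)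
      define D where "D x = (G x - G a) * H (real Q * x)" for x
      have kD: "k x = D x + G a * H (real Q * x)" for x by (simp add: k_def D_def algebra_simps)
      have cD: "continuous_on {a..b} D" unfolding D_def
        by (intro continuous_intros cHQ continuous_on_subset[OF cG sub])
      have nD: "cmod (D x) \<le> e" if x: "x \<in> {a..b}" for x
      proof -
        have "dist x a < d" using x ab Qd by (auto simp: dist_real_def)
        hence "cmod (G x - G a) < e" using dG[of a x] x sub ab by (auto simp: dist_norm)
        thus ?thesis unfolding D_def norm_mult using nH[of "real Q * x"]
          using mult_mono[of "cmod (G x - G a)" e "cmod (H (real Q * x))" 1] e by simp
      qed
      have iD: "D integrable_on {a..b}" by (rule integrable_continuous_real[OF cD])
      have "integral {a..b} k = integral {a..b} D + G a * (J / of_real (real Q))"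
        unfolding kD
        by (intro integral_unique has_integral_add integrable_integral iD has_integral_mult_right iHQ)
      hence "cmod (integral {a..b} k) \<le> cmod (integral {a..b} D) + cmod (G a) * (cmod J / Q)"
        by (metis norm_mult norm_divide norm_of_nat of_real_of_nat_eq norm_triangle_ineq)
      also have "\<dots> \<le> e * (b - a) + 1 * (cmod J / Q)"
        using integral_bound[OF ab(2) cD nD] nG[of a] ab
        by (intro add_mono mult_right_mono) auto
      also have "\<dots> = (e + cmod J) / Q" using ab by (simp add: add_divide_distrib)
      finally show ?thesis unfolding a_def b_def .
    qed
    have "integral {0..1} k = integral {0..real Q / Q} k" using Q by simp
    also have "\<dots> = (\<Sum>m<Q. integral {real m / Q..(real m + 1) / Q} k)"
      by (rule integral_split_grid[OF Q integrable_continuous_real[OF ck]]) simp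
    finally have "cmod (integral {0..1} k) \<le> (\<Sum>m<Q. cmod (integral {real m / Q..(real m + 1) / Q} k))"
      by (simp add: norm_sum)
    also have "\<dots> \<le> (\<Sum>m<Q. (e + cmod J) / Q)" by (intro sum_mono piece) auto
    also have "\<dots> = e + cmod J" using Q by simp
    finally show "cmod (integral {0..1} (\<lambda>x. G x * H (real Q * x))) \<le> e + cmod (integral {0..1} H)"
      unfolding k_def J_def .
  qed
qed

lemma char_int01:
  fixes k :: int
  shows "integral {0..1} (\<lambda>x. exp (2 * pi * \<i> * complex_of_real (real_of_int k * x))) = (if k = 0 then 1 else 0)"
proof (cases "k = 0")
  case True then show ?thesis by simp
next
  case False
  define c where "c = 2 * pi * \<i> * of_int k"
  have c0: "c \<noteq> 0" using False by (simp add: c_def)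
  have eq: "(\<lambda>x. exp (2 * pi * \<i> * complex_of_real (real_of_int k * x))) = (\<lambda>x. exp (c * of_real x))"
    by (simp add: c_def mult_ac)
  have D: "((\<lambda>x. exp (c * of_real x) / c) has_vector_derivative exp (c * of_real x)) (at x within {0..1})" for x
  proof -
    have "((\<lambda>z. exp (c * z) / c) has_field_derivative exp (c * of_real x)) (at (of_real x))"
      using c0 by (auto intro!: derivative_eq_intros)
    thus ?thesis by (rule has_vector_derivative_real_field)
  qed
  have "((\<lambda>x. exp (c * of_real x)) has_integral (exp (c * of_real 1) / c - exp (c * of_real 0) / c)) {0..1}"
    by (rule fundamental_theorem_of_calculus) (use D in auto)
  moreover have "exp c = 1"
    using exp_integer_2pi[of "of_int k"] by (simp add: c_def mult_ac)
  ultimately show ?thesis unfolding eq using False by (simp add: integral_unique)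
qed

lemma char_intT2:
  fixes k l :: int
  shows "integral ({0..1} \<times> {0..1}) (\<lambda>z. exp (2 * pi * \<i> * complex_of_real (real_of_int k * fst z + real_of_int l * snd z)))
     = (if k = 0 \<and> l = 0 then 1 else 0)"
proof -
  have box: "({0..1} \<times> {0..1} :: (real \<times> real) set) = cbox (0,0) (1,1)"
    by (simp add: cbox_Pair_eq)
  have split: "exp (2 * pi * \<i> * complex_of_real (real_of_int k * x + real_of_int l * y))
      = exp (2 * pi * \<i> * complex_of_real (real_of_int k * x)) * exp (2 * pi * \<i> * complex_of_real (real_of_int l * y))" for x y
    by (simp add: exp_add[symmetric] algebra_simps)
  have "integral (cbox (0,0) (1,1)) (\<lambda>z. exp (2 * pi * \<i> * complex_of_real (real_of_int k * fst z + real_of_int l * snd z)))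
      = integral (cbox 0 1) (\<lambda>x. integral (cbox 0 1) (\<lambda>y. exp (2 * pi * \<i> * complex_of_real (real_of_int k * x + real_of_int l * y))))"
    by (subst integral_prod_continuous) (auto intro!: continuous_intros)
  also have "\<dots> = integral {0..1} (\<lambda>x. exp (2 * pi * \<i> * complex_of_real (real_of_int k * x)) * (if l = 0 then 1 else 0))"
    unfolding split box_real by (simp only: integral_mult_right char_int01)
  also have "\<dots> = (if l = 0 then 1 else 0) * integral {0..1} (\<lambda>x. exp (2 * pi * \<i> * complex_of_real (real_of_int k * x)))"
    by (cases "l = 0") simp_all
  also have "\<dots> = (if k = 0 \<and> l = 0 then 1 else 0)"
    by (simp only: char_int01) simp
  finally show ?thesis unfolding box .
qed

lemma sin_per: "sin (2 * pi * (y + real m)) = sin (2 * pi * y)"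
proof -
  have "sin (2 * pi * (y + real m)) = sin (2 * pi * y + 2 * real m * pi)" by (simp add: algebra_simps)
  also have "\<dots> = sin (2 * pi * y)" by (simp add: sin_add)
  finally show ?thesis .
qed

lemma Gamma_split:
  assumes n: "n \<ge> 1"
  shows "Gamma n c (q(n := Q)) y0 x = y0 - ((\<Sum>j\<in>{1..<n}. c j * sin (2 * pi * real (q j) * x)) + c n * sin (2 * pi * (real Q * x)))"
proof -
  have set: "{1..n} = insert n {1..<n}" using n by auto
  have "(\<Sum>j=1..n. c j * sin (2 * pi * real ((q(n := Q)) j) * x))
      = c n * sin (2 * pi * real Q * x) + (\<Sum>j\<in>{1..<n}. c j * sin (2 * pi * real ((q(n := Q)) j) * x))"
    unfolding set by (subst sum.insert) auto
  also have "(\<Sum>j\<in>{1..<n}. c j * sin (2 * pi * real ((q(n := Q)) j) * x)) = (\<Sum>j\<in>{1..<n}. c j * sin (2 * pi * real (q j) * x))"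
    by (intro sum.cong) auto
  finally show ?thesis unfolding Gamma_def by (simp add: mult_ac)
qed

lemma term_bound:
  fixes k l :: int and n :: nat and c :: "nat \<Rightarrow> real" and q :: "nat \<Rightarrow> nat" and e1 T :: real
  assumes n: "n \<ge> 1" and l: "l \<noteq> 0" and e1: "e1 > 0"
    and TT: "\<And>s. T \<le> \<bar>s\<bar> \<Longrightarrow> cmod (integral {0..1} (\<lambda>y. exp (\<i> * of_real (s * sin (2*pi*y))))) \<le> e1"
    and cT: "T \<le> 2 * pi * c n"
  shows "eventually (\<lambda>Q::nat. \<forall>y0. cmod (integral {0..1} (\<lambda>x. exp (2 * pi * \<i> *
            complex_of_real (real_of_int k * x + real_of_int l * Gamma n c (q(n := Q)) y0 x)))) \<le> 2 * e1) sequentially"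
proof -
  define S1 where "S1 x = (\<Sum>j\<in>{1..<n}. c j * sin (2 * pi * real (q j) * x))" for x
  define s where "s = - (2 * pi * real_of_int l * c n)"
  define G0 where "G0 x = exp (2 * pi * \<i> * complex_of_real (real_of_int k * x - real_of_int l * S1 x))" for x
  define H where "H y = exp (\<i> * of_real (s * sin (2*pi*y)))" for y
  have ident: "exp (2 * pi * \<i> * complex_of_real (real_of_int k * x + real_of_int l * Gamma n c (q(n := Q)) y0 x))
      = exp (2 * pi * \<i> * complex_of_real (real_of_int l * y0)) * (G0 x * H (real Q * x))" for Q x y0
  proof -
    have "2 * pi * \<i> * complex_of_real (real_of_int k * x + real_of_int l * Gamma n c (q(n := Q)) y0 x)
        = 2 * pi * \<i> * complex_of_real (real_of_int l * y0) + (2 * pi * \<i> * complex_of_real (real_of_int k * x - real_of_int l * S1 x)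
          + \<i> * of_real (s * sin (2*pi*(real Q * x))))"
      unfolding Gamma_split[OF n] S1_def s_def by (simp add: algebra_simps)
    thus ?thesis unfolding G0_def H_def by (simp add: exp_add)
  qed
  have cS1: "continuous_on UNIV S1" unfolding S1_def by (intro continuous_intros)
  have cG0: "continuous_on {0..1} G0" unfolding G0_def
    by (intro continuous_intros continuous_on_subset[OF cS1]) auto
  have nG0: "cmod (G0 x) \<le> 1" for x unfolding G0_def
    using norm_exp_i_times[of "2 * pi * (real_of_int k * x - real_of_int l * S1 x)"] by (simp add: mult_ac)
  have cH: "continuous_on UNIV H" unfolding H_def by (intro continuous_intros)
  have nH: "cmod (H y) \<le> 1" for y unfolding H_def by (simp add: norm_exp_i_times)
  have pH: "H (y + real m) = H y" for y m unfolding H_def by (simp add: sin_per)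
  have Hsmall: "cmod (integral {0..1} H) \<le> e1"
  proof -
    have "2 * pi * c n \<le> 2 * pi * (\<bar>real_of_int l\<bar> * \<bar>c n\<bar>)"
    proof (intro mult_left_mono)
      have "\<bar>real_of_int l\<bar> \<ge> 1" using l by linarith
      hence "1 * \<bar>c n\<bar> \<le> \<bar>real_of_int l\<bar> * \<bar>c n\<bar>" by (intro mult_right_mono) auto
      thus "c n \<le> \<bar>real_of_int l\<bar> * \<bar>c n\<bar>" by linarith
    qed auto
    also have "\<dots> = \<bar>s\<bar>" by (simp add: s_def abs_mult)
    finally have "T \<le> \<bar>s\<bar>" using cT by linarith
    from TT[OF this] show ?thesis unfolding H_def .
  qed
  have ev: "eventually (\<lambda>Q::nat. cmod (integral {0..1} (\<lambda>x. G0 x * H (real Q * x))) \<le> e1 + cmod (integral {0..1} H)) sequentially"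
    by (rule avg_lemma[OF cG0 _ cH nH pH e1]) (use nG0 in auto)
  show ?thesis
  proof (rule eventually_mono[OF ev], intro allI)
    fix Q :: nat and y0 :: real
    assume Q: "cmod (integral {0..1} (\<lambda>x. G0 x * H (real Q * x))) \<le> e1 + cmod (integral {0..1} H)"
    have "integral {0..1} (\<lambda>x. exp (2 * pi * \<i> * complex_of_real (real_of_int k * x + real_of_int l * Gamma n c (q(n := Q)) y0 x)))
        = exp (2 * pi * \<i> * complex_of_real (real_of_int l * y0)) * integral {0..1} (\<lambda>x. G0 x * H (real Q * x))"
      unfolding ident by simp
    hence "cmod (integral {0..1} (\<lambda>x. exp (2 * pi * \<i> * complex_of_real (real_of_int k * x + real_of_int l * Gamma n c (q(n := Q)) y0 x))))
        = cmod (integral {0..1} (\<lambda>x. G0 x * H (real Q * x)))"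
      using norm_exp_i_times[of "2 * pi * (real_of_int l * y0)"] by (simp add: norm_mult mult_ac)
    thus "cmod (integral {0..1} (\<lambda>x. exp (2 * pi * \<i> * complex_of_real (real_of_int k * x + real_of_int l * Gamma n c (q(n := Q)) y0 x)))) \<le> 2 * e1"
      using Q Hsmall by linarith
  qed
qed

theorem lemma5p1:
  fixes n :: nat
  assumes "n \<ge> 1"
  shows "\<forall>f. trig_poly_T2 f \<longrightarrow> (\<forall>\<epsilon>>0. \<exists>ct::real.
    \<forall>c :: nat \<Rightarrow> real. (\<forall>j\<in>{1..n}. c j > 0) \<longrightarrow> c n > ct \<longrightarrow>
    (\<forall>q :: nat \<Rightarrow> nat. (\<forall>j\<in>{1..<n}. q j > 0) \<longrightarrow>
      (\<exists>qt::real. \<forall>Q::nat. Q > 0 \<longrightarrow> real Q > qt \<longrightarrow>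
        (\<forall>y0::real. cmod (int_mu n c (q(n := Q)) y0 f - int_T2 f) < \<epsilon>))))"
proof (intro allI impI)
  fix f :: "real \<Rightarrow> real \<Rightarrow> complex" and \<epsilon> :: real
  assume tp: "trig_poly_T2 f" and eps: "\<epsilon> > 0"
  define ch where "ch p x y = exp (2 * pi * \<i> * complex_of_real (real_of_int (fst p) * x + real_of_int (snd p) * y))"
    for p :: "int \<times> int" and x y :: real
  obtain S :: "(int \<times> int) set" and a where fin: "finite S"
    and fS0: "\<And>x y. f x y = (\<Sum>(k,l)\<in>S. a (k,l) * exp (2 * pi * \<i> * complex_of_real (real_of_int k * x + real_of_int l * y)))"
    using tp unfolding trig_poly_T2_def by blast
  have fS: "f x y = (\<Sum>p\<in>S. a p * ch p x y)" for x y
    unfolding fS0 ch_def by (simp add: case_prod_unfold)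
  define A where "A = (\<Sum>p\<in>S. cmod (a p))"
  have A0: "A \<ge> 0" unfolding A_def by (intro sum_nonneg) auto
  define e1 where "e1 = \<epsilon> / (2 * (A + 1))"
  have e1: "e1 > 0" using eps A0 by (simp add: e1_def)
  obtain T where T: "T > 0"
    and TT: "\<And>s. T \<le> \<bar>s\<bar> \<Longrightarrow> cmod (integral {0..1} (\<lambda>y. exp (\<i> * of_real (s * sin (2*pi*y))))) \<le> e1"
    using bessel_decay[OF e1] by blast
  show "\<exists>ct::real. \<forall>c :: nat \<Rightarrow> real. (\<forall>j\<in>{1..n}. c j > 0) \<longrightarrow> c n > ct \<longrightarrow>
    (\<forall>q :: nat \<Rightarrow> nat. (\<forall>j\<in>{1..<n}. q j > 0) \<longrightarrow>
      (\<exists>qt::real. \<forall>Q::nat. Q > 0 \<longrightarrow> real Q > qt \<longrightarrow>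
        (\<forall>y0::real. cmod (int_mu n c (q(n := Q)) y0 f - int_T2 f) < \<epsilon>)))"
  proof (rule exI[of _ "T / (2 * pi)"], intro allI impI)
    fix c :: "nat \<Rightarrow> real" and q :: "nat \<Rightarrow> nat"
    assume cpos: "\<forall>j\<in>{1..n}. c j > 0" and cn: "c n > T / (2 * pi)" and qpos: "\<forall>j\<in>{1..<n}. q j > 0"
    have cT: "T \<le> 2 * pi * c n" using cn by (simp add: field_simps)
    define I where "I p Q y0 = integral {0..1} (\<lambda>x. ch p x (Gamma n c (q(n := Q)) y0 x))" for p Q y0
    define P where "P p Q \<longleftrightarrow> (\<forall>y0. cmod (I p Q y0 - (if p = (0,0) then 1 else 0)) \<le> (if snd p = 0 then 0 else 2 * e1))"
      for p Q
    have evP: "eventually (P p) sequentially" if "p \<in> S" for p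
    proof (cases "snd p = 0")
      case True
      have "I p Q y0 = (if p = (0,0) then 1 else 0)" for Q y0
      proof -
        have "I p Q y0 = integral {0..1} (\<lambda>x. exp (2 * pi * \<i> * complex_of_real (real_of_int (fst p) * x)))"
          unfolding I_def ch_def using True by simp
        also have "\<dots> = (if p = (0,0) then 1 else 0)" using True by (simp only: char_int01) (simp add: prod_eq_iff)
        finally show ?thesis .
      qed
      then show ?thesis unfolding P_def using True by simp
    next
      case False
      have ev: "eventually (\<lambda>Q::nat. \<forall>y0. cmod (integral {0..1} (\<lambda>x. exp (2 * pi * \<i> *
            complex_of_real (real_of_int (fst p) * x + real_of_int (snd p) * Gamma n c (q(n := Q)) y0 x)))) \<le> 2 * e1) sequentially"
        by (rule term_bound[where k="fst p" and l="snd p" and c=c and q=q and n=n, OF assms False e1 TT cT])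
      show ?thesis
        by (rule eventually_mono[OF ev]) (use False in \<open>auto simp: P_def I_def ch_def\<close>)
    qed
    have "eventually (\<lambda>Q. \<forall>p\<in>S. P p Q) sequentially"
      by (rule eventually_ball_finite[OF fin, of "\<lambda>Q p. P p Q"]) (use evP in simp)
    then obtain N where N: "\<And>Q. Q \<ge> N \<Longrightarrow> \<forall>p\<in>S. P p Q"
      unfolding eventually_sequentially by blast
    show "\<exists>qt::real. \<forall>Q::nat. Q > 0 \<longrightarrow> real Q > qt \<longrightarrow>
        (\<forall>y0::real. cmod (int_mu n c (q(n := Q)) y0 f - int_T2 f) < \<epsilon>)"
    proof (intro exI[of _ "real N"] allI impI)
      fix Q :: nat and y0 :: real
      assume "real Q > real N"
      hence PQ: "\<forall>p\<in>S. P p Q" using N by simp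
      have chc: "continuous_on X (\<lambda>x. ch p x (Gamma n c (q(n := Q)) y0 x))" for X p
        unfolding ch_def Gamma_def by (intro continuous_intros)
      have mu: "int_mu n c (q(n := Q)) y0 f = (\<Sum>p\<in>S. a p * I p Q y0)"
      proof -
        have "int_mu n c (q(n := Q)) y0 f = integral {0..1} (\<lambda>x. \<Sum>p\<in>S. a p * ch p x (Gamma n c (q(n := Q)) y0 x))"
          unfolding int_mu_def fS ..
        also have "\<dots> = (\<Sum>p\<in>S. integral {0..1} (\<lambda>x. a p * ch p x (Gamma n c (q(n := Q)) y0 x)))"
          by (rule integral_sum[OF fin]) (intro integrable_continuous_real continuous_intros chc)
        also have "\<dots> = (\<Sum>p\<in>S. a p * I p Q y0)" unfolding I_def by simp
        finally show ?thesis .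
      qed
      have T2: "int_T2 f = (\<Sum>p\<in>S. a p * (if p = (0,0) then 1 else 0))"
      proof -
        have chc2: "continuous_on X (\<lambda>z. ch p (fst z) (snd z))" for X p
          unfolding ch_def by (intro continuous_intros)
        have box: "({0..1} \<times> {0..1} :: (real \<times> real) set) = cbox (0,0) (1,1)"
          by (simp add: cbox_Pair_eq)
        have "int_T2 f = integral ({0..1} \<times> {0..1}) (\<lambda>z. \<Sum>p\<in>S. a p * ch p (fst z) (snd z))"
          unfolding int_T2_def fS ..
        also have "\<dots> = (\<Sum>p\<in>S. integral ({0..1} \<times> {0..1}) (\<lambda>z. a p * ch p (fst z) (snd z)))"
          unfolding box
          by (rule integral_sum[OF fin]) (intro integrable_continuous continuous_intros chc2)
        also have "\<dots> = (\<Sum>p\<in>S. a p * (if p = (0,0) then 1 else 0))"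
          by (intro sum.cong refl) (simp only: integral_mult_right ch_def char_intT2 prod_eq_iff fst_conv snd_conv)
        finally show ?thesis .
      qed
      have "int_mu n c (q(n := Q)) y0 f - int_T2 f = (\<Sum>p\<in>S. a p * (I p Q y0 - (if p = (0,0) then 1 else 0)))"
        unfolding mu T2 right_diff_distrib sum_subtractf ..
      hence "cmod (int_mu n c (q(n := Q)) y0 f - int_T2 f) \<le> (\<Sum>p\<in>S. cmod (a p) * cmod (I p Q y0 - (if p = (0,0) then 1 else 0)))"
        using norm_sum[of "\<lambda>p. a p * (I p Q y0 - (if p = (0,0) then 1 else 0))" S] by (simp add: norm_mult)
      also have "\<dots> \<le> (\<Sum>p\<in>S. cmod (a p) * (2 * e1))"
      proof (intro sum_mono mult_left_mono)
        fix p assume "p \<in> S"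
        hence "P p Q" using PQ by blast
        hence "cmod (I p Q y0 - (if p = (0,0) then 1 else 0)) \<le> (if snd p = 0 then 0 else 2 * e1)"
          unfolding P_def by blast
        moreover have "(if snd p = 0 then 0 else 2 * e1) \<le> 2 * e1" using e1 by simp
        ultimately show "cmod (I p Q y0 - (if p = (0,0) then 1 else 0)) \<le> 2 * e1" by linarith
      qed auto
      also have "\<dots> = 2 * e1 * A" unfolding A_def by (simp add: sum_distrib_left sum_distrib_right mult.commute)
      also have "\<dots> < \<epsilon>"
      proof -
        have "2 * e1 * A = \<epsilon> * (A / (A + 1))" using A0 by (simp add: e1_def field_simps)
        also have "\<dots> < \<epsilon> * 1" using A0 eps by (intro mult_strict_left_mono) auto
        finally show ?thesis by simp
      qed
      finally show "cmod (int_mu n c (q(n := Q)) y0 f - int_T2 f) < \<epsilon>" .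
    qed
  qed
qed

end
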